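(* Let $g,h>\tfrac12$, $M_{\mathrm{I}},M_{\mathrm{II}}\in\mathbb{Z}_{\ge0}$, $M=M_{\mathrm{I}}+M_{\mathrm{II}}$, $M'=\frac12(M_{\mathrm{I}}-M_{\mathrm{II}})$, let $\mathcal{D}=((d_1,t_1),\ldots,(d_M,t_M))$ be an ordered list of pairwise distinct seed labels as in the context with $M_{\mathrm{I}}$ of Type I and $M_{\mathrm{II}}$ of Type II, and let $n\in\mathbb{Z}_{\ge0}$. For a seed label set $\xi_{(\mathrm{v},\mathrm{I})}(\eta)=P^{(g-\frac12,\frac12-h)}_{\mathrm{v}}(\eta)$, $\xi_{(\mathrm{v},\mathrm{II})}(\eta)=P^{(\frac12-g,h-\frac12)}_{\mathrm{v}}(\eta)$, $\tilde{\mathcal{E}}_{(\mathrm{v},\mathrm{I})}=-4(g+\mathrm{v}+\frac12)(h-\mathrm{v}-\frac12)$, $\tilde{\mathcal{E}}_{(\mathrm{v},\mathrm{II})}=-4(g-\mathrm{v}-\frac12)(h+\mathrm{v}+\frac12)$, $\tilde\zeta_{(\mathrm{v},\mathrm{I})}(\eta)=(h-\frac12-\mathrm{v})(1-\eta)P^{(g+\frac12,-h-\frac12)}_{\mathrm{v}}(\eta)$, $\tilde\zeta_{(\mathrm{v},\mathrm{II})}(\eta)=-(g-\frac12-\mathrm{v})(1+\eta)P^{(-g-\frac12,h+\frac12)}_{\mathrm{v}}(\eta)$, and set $\mathcal{E}_n=4n(n+g+h)$, $\zeta_n(\eta)=-\frac12(n+g+h)(1-\eta^2)P^{(g+\frac12,h+\frac12)}_{n-1}(\eta)$.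 Define the $(M+1)\times(M+1)$ matrix $(a_{j,k})$ by: for $1\le k\le M$, $a_{2l-1,k}=(-\tilde{\mathcal{E}}_{(d_k,t_k)})^{l-1}\xi_{(d_k,t_k)}(\eta)$, $a_{2l,k}=(-\tilde{\mathcal{E}}_{(d_k,t_k)})^{l-1}\tilde\zeta_{(d_k,t_k)}(\eta)$; and $a_{2l-1,M+1}=(-\mathcal{E}_n)^{l-1}P^{(g-\frac12,h-\frac12)}_n(\eta)$, $a_{2l,M+1}=(-\mathcal{E}_n)^{l-1}\zeta_n(\eta)$ (for $1\le l\le[\frac{M+2}{2}]$ in odd rows, $1\le l\le[\frac{M+1}{2}]$ in even rows). Define the $M\times M$ matrix $(b_{j,k})$ by $b_{2l-1,k}=(-\tilde{\mathcal{E}}_{(d_k,t_k)})^{l-1}\xi_{(d_k,t_k)}(\eta)$, $1\le l\le[\frac{M+1}{2}]$, and $b_{2l,k}=(-\tilde{\mathcal{E}}_{(d_k,t_k)})^{l-1}\tilde\zeta_{(d_k,t_k)}(\eta)$, $1\le l\le[\frac M2]$. Then for $-1<\eta<1$, $$P_{\mathcal{D},n}(\eta)=(-4)^{-\frac12M(M+1)}\det(a_{j,k})\Big(\frac{1-\eta}{2}\Big)^{-([M']+1)([M']+M-2[\frac M2])}\Big(\frac{1+\eta}{2}\Big)^{-([-M']+1)([-M']+M-2[\frac M2])},$$ $$\Xi_{\mathcal{D}}(\eta)=(-4)^{-\frac12M(M-1)}\det(b_{j,k})\Big(\frac{1-\eta}{2}\cdot\frac{1+\eta}{2}\Big)^{-[M']([M']+M-2[\frac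 M2])}.$$
   Context: $[a]$ denotes the greatest integer not exceeding $a$, and $[a]'$ the greatest integer strictly less than $a$. $(a)_k=a(a+1)\cdots(a+k-1)$, $(a)_0=1$. For real $\alpha,\beta$ and $m\in\mathbb{Z}_{\ge0}$, $P^{(\alpha,\beta)}_m(\eta)=\frac{1}{m!}\sum_{k=0}^m\frac{(-m)_k(m+\alpha+\beta+1)_k(\alpha+k+1)_{m-k}}{k!}\big(\frac{1-\eta}{2}\big)^k$ (the Jacobi polynomial), and $P^{(\alpha,\beta)}_m\equiv0$ for $m<0$. Fix $g,h>\frac12$. A seed label is a pair $(\mathrm{v},t)$, $t\in\{\mathrm{I},\mathrm{II}\}$, with $\mathrm{v}\in\{0,\ldots,[h-\frac12]'\}$ if $t=\mathrm{I}$ and $\mathrm{v}\in\{0,\ldots,[g-\frac12]'\}$ if $t=\mathrm{II}$. For $-1<\eta<1$ let $\mu_{(\mathrm{v},\mathrm{I})}(\eta)=\big(\frac{1+\eta}{2}\big)^{\frac12-h}P^{(g-\frac12,\frac12-h)}_{\mathrm{v}}(\eta)$, $\mu_{(\mathrm{v},\mathrm{II})}(\eta)=\big(\frac{1-\eta}{2}\big)^{\frac12-g}P^{(\frac12-g,h-\frac12)}_{\mathrm{v}}(\eta)$, $P_n(\eta)=P^{(g-\frac12,h-\frac12)}_n(\eta)$, and $\mathrm{W}[f_1,\ldots,f_m](\eta)=\det\big(\frac{d^{j-1}f_k}{d\eta^{j-1}}\big)_{1\le j,k\le m}$. For $\mathcal{D}$ as in the claim, $\Xi_{\mathcal{D}}(\eta)=\mathrm{W}[\mu_{(d_1,t_1)},\ldots,\mu_{(d_M,t_M)}](\eta)\big(\frac{1-\eta}{2}\big)^{(M_{\mathrm{I}}+g-\frac12)M_{\mathrm{II}}}\big(\frac{1+\eta}{2}\big)^{(M_{\mathrm{II}}+h-\frac12)M_{\mathrm{I}}}$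 and $P_{\mathcal{D},n}(\eta)=\mathrm{W}[\mu_{(d_1,t_1)},\ldots,\mu_{(d_M,t_M)},P_n](\eta)\big(\frac{1-\eta}{2}\big)^{(M_{\mathrm{I}}+g+\frac12)M_{\mathrm{II}}}\big(\frac{1+\eta}{2}\big)^{(M_{\mathrm{II}}+h+\frac12)M_{\mathrm{I}}}$ (the multi-indexed Jacobi polynomials). *)

theory Defs
  imports Complex_Main "HOL-Analysis.Derivative" "Jordan_Normal_Form.Determinant"
begin

definition jacobiP :: "real \<Rightarrow> real \<Rightarrow> int \<Rightarrow> real \<Rightarrow> real" where
  "jacobiP a b m x = (if m < 0 then 0 else
     (let m' = nat m in
      (1 / fact m') * (\<Sum>k\<le>m'. pochhammer (- real m') k * pochhammer (real m' + a + b + 1) k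
          * pochhammer (a + real k + 1) (m' - k) / fact k * ((1 - x) / 2) ^ k)))"

datatype seedtype = TI | TII

text \<open>Seed label (v,t) is admissible: v <= [h-1/2]' (type I), v <= [g-1/2]' (type II),
  i.e. v is a nonnegative integer strictly less than h-1/2 resp. g-1/2.\<close>
definition seed_ok :: "real \<Rightarrow> real \<Rightarrow> nat \<times> seedtype \<Rightarrow> bool" where
  "seed_ok g h D = (case D of (v, TI) \<Rightarrow> real v < h - 1/2 | (v, TII) \<Rightarrow> real v < g - 1/2)"

definition MI :: "(nat \<times> seedtype) list \<Rightarrow> nat" where
  "MI D = length (filter (\<lambda>d. snd d = TI) D)"
definition MII :: "(nat \<times> seedtype) list \<Rightarrow> nat" where
  "MII D = length (filter (\<lambda>d. snd d = TII) D)"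

definition mu :: "real \<Rightarrow> real \<Rightarrow> nat \<times> seedtype \<Rightarrow> real \<Rightarrow> real" where
  "mu g h D x = (case D of
     (v, TI) \<Rightarrow> ((1 + x) / 2) powr (1/2 - h) * jacobiP (g - 1/2) (1/2 - h) (int v) x
   | (v, TII) \<Rightarrow> ((1 - x) / 2) powr (1/2 - g) * jacobiP (1/2 - g) (h - 1/2) (int v) x)"

definition Pn :: "real \<Rightarrow> real \<Rightarrow> nat \<Rightarrow> real \<Rightarrow> real" where
  "Pn g h n x = jacobiP (g - 1/2) (h - 1/2) (int n) x"

definition wronskian :: "(real \<Rightarrow> real) list \<Rightarrow> real \<Rightarrow> real" where
  "wronskian fs x = det (mat (length fs) (length fs) (\<lambda>(j, k). (deriv ^^ j) (fs ! k) x))"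

definition XiD :: "real \<Rightarrow> real \<Rightarrow> (nat \<times> seedtype) list \<Rightarrow> real \<Rightarrow> real" where
  "XiD g h D x = wronskian (map (mu g h) D) x
     * ((1 - x) / 2) powr ((real (MI D) + g - 1/2) * real (MII D))
     * ((1 + x) / 2) powr ((real (MII D) + h - 1/2) * real (MI D))"

definition PD :: "real \<Rightarrow> real \<Rightarrow> (nat \<times> seedtype) list \<Rightarrow> nat \<Rightarrow> real \<Rightarrow> real" where
  "PD g h D n x = wronskian (map (mu g h) D @ [Pn g h n]) x
     * ((1 - x) / 2) powr ((real (MI D) + g + 1/2) * real (MII D))
     * ((1 + x) / 2) powr ((real (MII D) + h + 1/2) * real (MI D))"

definition xi :: "real \<Rightarrow> real \<Rightarrow> nat \<times> seedtype \<Rightarrow> real \<Rightarrow> real" where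
  "xi g h D x = (case D of
     (v, TI) \<Rightarrow> jacobiP (g - 1/2) (1/2 - h) (int v) x
   | (v, TII) \<Rightarrow> jacobiP (1/2 - g) (h - 1/2) (int v) x)"

definition Etil :: "real \<Rightarrow> real \<Rightarrow> nat \<times> seedtype \<Rightarrow> real" where
  "Etil g h D = (case D of
     (v, TI) \<Rightarrow> -4 * (g + real v + 1/2) * (h - real v - 1/2)
   | (v, TII) \<Rightarrow> -4 * (g - real v - 1/2) * (h + real v + 1/2))"

definition zetatil :: "real \<Rightarrow> real \<Rightarrow> nat \<times> seedtype \<Rightarrow> real \<Rightarrow> real" where
  "zetatil g h D x = (case D of
     (v, TI) \<Rightarrow> (h - 1/2 - real v) * (1 - x) * jacobiP (g + 1/2) (- h - 1/2) (int v) x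
   | (v, TII) \<Rightarrow> - (g - 1/2 - real v) * (1 + x) * jacobiP (- g - 1/2) (h + 1/2) (int v) x)"

definition En :: "real \<Rightarrow> real \<Rightarrow> nat \<Rightarrow> real" where
  "En g h n = 4 * real n * (real n + g + h)"

definition zetan :: "real \<Rightarrow> real \<Rightarrow> nat \<Rightarrow> real \<Rightarrow> real" where
  "zetan g h n x = - (1/2) * (real n + g + h) * (1 - x^2) * jacobiP (g + 1/2) (h + 1/2) (int n - 1) x"

text \<open>Matrices (0-indexed rows i = j-1: row j = 2l-1 (i even) has l-1 = i div 2,
  row j = 2l (i odd) has l-1 = i div 2).\<close>
definition amat :: "real \<Rightarrow> real \<Rightarrow> (nat \<times> seedtype) list \<Rightarrow> nat \<Rightarrow> real \<Rightarrow> real mat" where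
  "amat g h D n x = mat (length D + 1) (length D + 1) (\<lambda>(i, k).
     if k < length D then
       (- Etil g h (D ! k)) ^ (i div 2) * (if even i then xi g h (D ! k) x else zetatil g h (D ! k) x)
     else
       (- En g h n) ^ (i div 2) * (if even i then Pn g h n x else zetan g h n x))"

definition bmat :: "real \<Rightarrow> real \<Rightarrow> (nat \<times> seedtype) list \<Rightarrow> real \<Rightarrow> real mat" where
  "bmat g h D x = mat (length D) (length D) (\<lambda>(i, k).
       (- Etil g h (D ! k)) ^ (i div 2) * (if even i then xi g h (D ! k) x else zetatil g h (D ! k) x))"

end

theory Submission
  imports Defs
begin


definition cf :: "real \<Rightarrow> real \<Rightarrow> nat \<Rightarrow> nat \<Rightarrow> real" where
  "cf a b m k = pochhammer (- real m) k * pochhammer (real m + a + b + 1) k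
      * pochhammer (a + real k + 1) (m - k) / (fact m * fact k)"

definition Jp :: "real \<Rightarrow> real \<Rightarrow> nat \<Rightarrow> real poly" where
  "Jp a b m = (\<Sum>k\<le>m. monom (cf a b m k) k)"

lemma cf_zero: "m < k \<Longrightarrow> cf a b m k = 0"
  unfolding cf_def by (simp add: pochhammer_of_nat_eq_0_iff)

lemma coeff_Jp: "coeff (Jp a b m) k = cf a b m k"
  unfolding Jp_def by (auto simp: coeff_sum coeff_monom cf_zero)

lemma jacobiP_poly: "jacobiP a b (int m) x = poly (Jp a b m) ((1 - x) / 2)"
  unfolding jacobiP_def Jp_def cf_def
  by (simp add: poly_sum poly_monom sum_distrib_left field_simps)

lemma coeff_eqI: "(\<And>k. coeff p k = coeff q k) \<Longrightarrow> p = q"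
  by (simp add: poly_eq_iff)

lemma fact_pos_real: "(fact n :: real) > 0" by simp

lemma cf_deriv: "real (Suc k) * cf a b (Suc m) (Suc k) = - (real m + a + b + 2) * cf (a+1) (b+1) m k"
proof (cases "k \<le> m")
  case False thus ?thesis by (simp add: cf_zero)
next
  case True
  have p1: "pochhammer (- real (Suc m)) (Suc k) = - real (Suc m) * pochhammer (- real m) k"
    by (simp add: pochhammer_rec)
  have p2: "pochhammer (real (Suc m) + a + b + 1) (Suc k) = (real m + a + b + 2) * pochhammer (real m + (a+1) + (b+1) + 1) k"
    by (simp add: pochhammer_rec algebra_simps)
  have p3: "pochhammer (a + real (Suc k) + 1) (Suc m - Suc k) = pochhammer ((a+1) + real k + 1) (m - k)"
    by (simp add: algebra_simps)
  have f1: "(fact (Suc m) :: real) = real (Suc m) * fact m" by simp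
  have f2: "(fact (Suc k) :: real) = real (Suc k) * fact k" by simp
  have alg: "\<And>A B C X fm fk s t. s > 0 \<Longrightarrow> t > 0 \<Longrightarrow> fm > 0 \<Longrightarrow> fk > 0 \<Longrightarrow> s * ((-t * A) * (X * B) * C / (t * fm * (s * fk))) = -X*(A*B*C/(fm*fk::real))"
    by (simp add: field_simps)
  show ?thesis unfolding cf_def p1 p2 p3 f1 f2
    by (rule alg) (simp_all only: of_nat_0_less_iff zero_less_Suc fact_pos_real)
qed

lemma Jp_deriv: "pderiv (Jp a b (Suc m)) = smult (- (real m + a + b + 2)) (Jp (a+1) (b+1) m)"
  by (rule coeff_eqI) (simp only: coeff_pderiv coeff_Jp cf_deriv coeff_smult)

lemma cf_rec: "real (Suc k) * (real k + a + 1) * cf a b m (Suc k)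
   = (real k - real m) * (real k + real m + a + b + 1) * cf a b m k"
proof (cases "k < m")
  case False
  then consider "k = m" | "m < k" by linarith
  thus ?thesis by cases (simp_all add: cf_zero)
next
  case True
  have p1: "pochhammer (- real m) (Suc k) = pochhammer (- real m) k * (real k - real m)"
    by (simp add: pochhammer_Suc)
  have p2: "pochhammer (real m + a + b + 1) (Suc k) = pochhammer (real m + a + b + 1) k * (real k + real m + a + b + 1)"
    by (simp add: pochhammer_Suc algebra_simps)
  have p3: "pochhammer (a + real k + 1) (m - k) = (real k + a + 1) * pochhammer (a + real (Suc k) + 1) (m - Suc k)"
  proof -
    have "m - k = Suc (m - Suc k)" using True by simp
    thus ?thesis by (simp add: pochhammer_rec algebra_simps)
  qed
  have f2: "(fact (Suc k) :: real) = real (Suc k) * fact k" by simp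
  have alg: "\<And>A B C X Y Z fm fk s. s > 0 \<Longrightarrow> fm > 0 \<Longrightarrow> fk > 0 \<Longrightarrow> s * Z * ((A * X) * (B * Y) * C / (fm * (s * fk))) = X * Y * (A*B*(Z * C)/(fm*fk::real))"
    by (simp add: field_simps)
  show ?thesis unfolding cf_def p1 p2 p3 f2
    by (rule alg) (simp_all only: of_nat_0_less_iff zero_less_Suc fact_pos_real)
qed

lemma coeff_t_d: "coeff (pCons 0 (pderiv p)) k = real k * coeff p k"
  by (cases k) (simp_all add: coeff_pderiv)

lemma coeff_t_dd: "coeff (pCons 0 (pderiv (pderiv p))) k = real k * (real k + 1) * coeff p (Suc k)"
  by (cases k) (simp_all add: coeff_pderiv algebra_simps)

lemma coeff_tt_dd: "coeff (pCons 0 (pCons 0 (pderiv (pderiv p)))) k = real k * (real k - 1) * coeff p k"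
proof (cases k)
  case 0 thus ?thesis by simp
next
  case (Suc j) thus ?thesis by (cases j) (simp_all add: coeff_pderiv algebra_simps)
qed

lemma Jp_ode:
  fixes a b :: real and m :: nat
  defines "p \<equiv> Jp a b m"
  shows "pCons 0 (pderiv (pderiv p)) - pCons 0 (pCons 0 (pderiv (pderiv p))) + smult (a+1) (pderiv p)
     - smult (a+b+2) (pCons 0 (pderiv p)) + smult (real m * (real m + a + b + 1)) p = 0"
proof (rule coeff_eqI)
  fix k
  have r: "real (Suc k) * (real k + a + 1) * cf a b m (Suc k)
   = (real k - real m) * (real k + real m + a + b + 1) * cf a b m k" by (rule cf_rec)
  show "coeff (pCons 0 (pderiv (pderiv p)) - pCons 0 (pCons 0 (pderiv (pderiv p))) + smult (a+1) (pderiv p)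
     - smult (a+b+2) (pCons 0 (pderiv p)) + smult (real m * (real m + a + b + 1)) p) k = coeff 0 k"
    unfolding coeff_add coeff_diff coeff_smult coeff_t_d coeff_t_dd coeff_tt_dd coeff_pderiv p_def coeff_Jp
    using r by (simp add: algebra_simps)
qed

lemma cf_I: "- real (Suc k) * cf a b v (Suc k) + (real k + b) * cf a b v k = (b + real v) * cf (a+1) (b-1) v k"
proof -
  consider "k < v" | "k = v" | "v < k" by linarith
  thus ?thesis
  proof cases
    case 3 thus ?thesis by (simp add: cf_zero)
  next
    case 2
    have z: "cf a b v (Suc k) = 0" using 2 by (simp add: cf_zero)
    have q: "cf (a+1) (b-1) v k = cf a b v k" using 2 unfolding cf_def by (simp add: algebra_simps)
    show ?thesis unfolding z q using 2 by (simp add: algebra_simps)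
  next
    case 1
    define G where "G = pochhammer (- real v) k * pochhammer (real v + a + b + 1) k / (fact v * fact k)"
    define R where "R = pochhammer (a + real k + 2) (v - Suc k)"
    have e: "v - k = Suc (v - Suc k)" using 1 by simp
    have c1: "cf a b v (Suc k) = G * (real k - real v) * (real v + a + b + 1 + real k) * R / real (Suc k)"
      unfolding cf_def G_def R_def by (simp add: pochhammer_Suc fact_Suc field_simps add_ac)
    have c0: "cf a b v k = G * (a + real k + 1) * R"
      unfolding cf_def G_def R_def e by (simp add: pochhammer_rec field_simps add_ac)
    have d0: "cf (a+1) (b-1) v k = G * R * (a + real v + 1)"
    proof -
      have "pochhammer (a + 1 + real k + 1) (v - k) = R * (a + real v + 1)"
        unfolding e R_def pochhammer_Suc using 1 by (simp add: algebra_simps of_nat_diff)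
      thus ?thesis unfolding cf_def G_def by (simp add: field_simps add_ac)
    qed
    show ?thesis unfolding c1 c0 d0 by (simp add: field_simps)
  qed
qed

lemma Jp_I: "- pderiv (Jp a b v) + pCons 0 (pderiv (Jp a b v)) + smult b (Jp a b v) = smult (b + real v) (Jp (a+1) (b-1) v)"
proof (rule coeff_eqI)
  fix k
  show "coeff (- pderiv (Jp a b v) + pCons 0 (pderiv (Jp a b v)) + smult b (Jp a b v)) k = coeff (smult (b + real v) (Jp (a+1) (b-1) v)) k"
    unfolding coeff_add coeff_minus coeff_smult coeff_t_d coeff_pderiv coeff_Jp
    using cf_I[of k a b v] by (simp add: algebra_simps)
qed

lemma cf_II: "(real k + a) * cf a b v k = (a + real v) * cf (a-1) (b+1) v k"
proof (cases "k \<le> v")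
  case False thus ?thesis by (simp add: cf_zero)
next
  case True
  have e: "Suc (v - k) = v - k + 1" by simp
  have "(a + real k) * pochhammer (a + real k + 1) (v - k) = pochhammer (a + real k) (Suc (v - k))"
    by (simp add: pochhammer_rec)
  also have "\<dots> = pochhammer (a + real k) (v - k) * (a + real v)"
    unfolding pochhammer_Suc using True by (simp add: of_nat_diff)
  finally have *: "(a + real k) * pochhammer (a + real k + 1) (v - k) = pochhammer (a + real k) (v - k) * (a + real v)" .
  have s: "real v + (a - 1) + (b + 1) + 1 = real v + a + b + 1" "a - 1 + real k + 1 = a + real k" by simp_all
  define X where "X = pochhammer (- real v) k * pochhammer (real v + a + b + 1) k / (fact v * fact k)"
  have c1: "cf a b v k = X * pochhammer (a + real k + 1) (v - k)" unfolding cf_def X_def by simp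
  have c2: "cf (a-1) (b+1) v k = X * pochhammer (a + real k) (v - k)" unfolding cf_def X_def s by simp
  have "(real k + a) * cf a b v k = X * ((a + real k) * pochhammer (a + real k + 1) (v - k))"
    unfolding c1 by (simp add: algebra_simps)
  also have "\<dots> = (a + real v) * cf (a-1) (b+1) v k" unfolding * c2 by (simp add: algebra_simps)
  finally show ?thesis .
qed

lemma Jp_II: "pCons 0 (pderiv (Jp a b v)) + smult a (Jp a b v) = smult (a + real v) (Jp (a-1) (b+1) v)"
proof (rule coeff_eqI)
  fix k
  show "coeff (pCons 0 (pderiv (Jp a b v)) + smult a (Jp a b v)) k = coeff (smult (a + real v) (Jp (a-1) (b+1) v)) k"
    unfolding coeff_add coeff_smult coeff_t_d coeff_Jp
    using cf_II[of k a b v] by (simp add: algebra_simps)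
qed




definition Dp :: "real poly" where "Dp = [:1, 0, -1:]"
definition Xp :: "real poly" where "Xp = [:0, 1:]"
definition rp :: "real \<Rightarrow> real \<Rightarrow> real poly" where "rp g h = [:g - h, g + h + 1:]"

lemma poly_Dp[simp]: "poly Dp y = 1 - y^2" by (simp add: Dp_def power2_eq_square)
lemma poly_Xp[simp]: "poly Xp y = y" by (simp add: Xp_def)
lemma poly_rp[simp]: "poly (rp g h) y = g - h + (g + h + 1) * y" by (simp add: rp_def)

fun cc :: "real \<Rightarrow> real \<Rightarrow> nat \<Rightarrow> nat \<Rightarrow> real poly" where
  "cc g h 0 i = (if i = 0 then 1 else 0)"
| "cc g h (Suc j) m = pderiv (cc g h j m) * Dp + smult (2 * real j) (Xp * cc g h j m)
     + (if odd m then rp g h * cc g h j m else 0)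
     + (if m = 0 then 0 else if odd (m - 1) then smult (1/4) (cc g h j (m - 1)) else cc g h j (m - 1) * Dp)"

lemma cc_zero: "j < i \<Longrightarrow> cc g h j i = 0"
proof (induction j arbitrary: i)
  case 0 thus ?case by simp
next
  case (Suc j) thus ?case by (simp del: One_nat_def)
qed

definition psi :: "real \<Rightarrow> (real \<Rightarrow> real) \<Rightarrow> (real \<Rightarrow> real) \<Rightarrow> nat \<Rightarrow> real \<Rightarrow> real" where
  "psi lam f f1 i y = lam ^ (i div 2) * (if even i then f y else f1 y)"

lemma quot_deriv:
  assumes "1 - y^2 \<noteq> 0"
  shows "((\<lambda>y. poly c y / (1 - y^2) ^ j) has_real_derivative
          poly (pderiv c * Dp + smult (2 * real j) (Xp * c)) y / (1 - y^2) ^ Suc j) (at y)"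
proof -
  have "((\<lambda>y. poly c y / (1 - y^2) ^ j) has_real_derivative
     (poly (pderiv c) y * (1 - y^2) ^ j - poly c y * (real j * (1 - y^2) ^ (j - 1) * (- (2 * y)))) / ((1 - y^2) ^ j * (1 - y^2) ^ j)) (at y)"
    by (rule derivative_eq_intros refl poly_DERIV | use assms in simp)+
  moreover have "(poly (pderiv c) y * (1 - y^2) ^ j - poly c y * (real j * (1 - y^2) ^ (j - 1) * (- (2 * y)))) / ((1 - y^2) ^ j * (1 - y^2) ^ j)
     = poly (pderiv c * Dp + smult (2 * real j) (Xp * c)) y / (1 - y^2) ^ Suc j"
  proof (cases j)
    case 0 thus ?thesis using assms by (simp add: field_simps)
  next
    case (Suc k)
    have aux: "\<And>A C d P jj::real. P \<noteq> 0 \<Longrightarrow> d \<noteq> 0 \<Longrightarrow>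
       (A * (P * d) - C * (jj * P * (- (2 * y)))) / ((P * d) * (P * d)) = (A * d + 2 * jj * (y * C)) / (P * d * d)"
      by (simp add: field_simps)
    have "(1 - y^2) ^ k \<noteq> 0" using assms by simp
    from aux[OF this assms, of "poly (pderiv c) y" "poly c y" "real j"]
    show ?thesis using Suc by (simp add: mult_ac)
  qed
  ultimately show ?thesis by simp
qed

lemma psi_deriv:
  assumes d1: "(f has_real_derivative f1 y) (at y)"
    and d2: "(f1 has_real_derivative (poly (rp g h) y / (1-y^2) * f1 y + lam / (4*(1-y^2)) * f y)) (at y)"
  shows "(psi lam f f1 i has_real_derivative
     (if odd i then poly (rp g h) y / (1-y^2) * psi lam f f1 i y + 1 / (4*(1-y^2)) * psi lam f f1 (Suc i) y
      else psi lam f f1 (Suc i) y)) (at y)"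
proof (cases "even i")
  case True
  have e: "psi lam f f1 i = (\<lambda>y. lam ^ (i div 2) * f y)" using True by (simp add: psi_def fun_eq_iff)
  have "Suc i div 2 = i div 2" using True by presburger
  hence "psi lam f f1 (Suc i) y = lam ^ (i div 2) * f1 y" using True by (simp add: psi_def)
  thus ?thesis unfolding e using True DERIV_cmult[OF d1, of "lam ^ (i div 2)"] by simp
next
  case False
  have e: "psi lam f f1 i = (\<lambda>y. lam ^ (i div 2) * f1 y)" using False by (simp add: psi_def fun_eq_iff)
  have "Suc i div 2 = Suc (i div 2)" using False by presburger
  hence e2: "psi lam f f1 (Suc i) y = lam ^ (i div 2) * lam * f y" using False by (simp add: psi_def)
  have e3: "psi lam f f1 i y = lam ^ (i div 2) * f1 y" using e by simp
  show ?thesis unfolding e2 e3 unfolding e using False DERIV_cmult[OF d2, of "lam ^ (i div 2)"]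
    by (simp add: algebra_simps)
qed

lemma cc_Suc_val:
  assumes d: "1 - y^2 \<noteq> 0"
  shows "poly (cc g h (Suc j) m) y / (1-y^2) ^ Suc j =
    poly (pderiv (cc g h j m) * Dp + smult (2 * real j) (Xp * cc g h j m)) y / (1-y^2) ^ Suc j
    + (if odd m then poly (cc g h j m) y / (1-y^2)^j * (poly (rp g h) y / (1-y^2)) else 0)
    + (if m = 0 then 0 else poly (cc g h j (m-1)) y / (1-y^2)^j * (if odd (m-1) then 1 / (4*(1-y^2)) else 1))"
  using d by (simp add: add_divide_distrib field_simps)

lemma expansion_step:
  assumes y: "-1 < y" "y < 1"
    and d1: "(f has_real_derivative f1 y) (at y)"
    and d2: "(f1 has_real_derivative (poly (rp g h) y / (1-y^2) * f1 y + lam / (4*(1-y^2)) * f y)) (at y)"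
  shows "((\<lambda>y. \<Sum>i\<le>j. poly (cc g h j i) y / (1-y^2)^j * psi lam f f1 i y) has_real_derivative
          (\<Sum>i\<le>Suc j. poly (cc g h (Suc j) i) y / (1-y^2)^Suc j * psi lam f f1 i y)) (at y)"
proof -
  have dnz: "1 - y^2 \<noteq> 0"
  proof -
    have "y^2 < 1" using y by (simp add: abs_square_less_1)
    thus ?thesis by simp
  qed
  define A where "A i = poly (pderiv (cc g h j i) * Dp + smult (2 * real j) (Xp * cc g h j i)) y / (1 - y^2) ^ Suc j" for i
  define B where "B i = poly (cc g h j i) y / (1-y^2)^j" for i
  define P where "P i = psi lam f f1 i y" for i
  define p where "p = poly (rp g h) y / (1-y^2)"
  define q where "q = 1 / (4*(1-y^2))"
  have dv: "((\<lambda>y. \<Sum>i\<le>j. poly (cc g h j i) y / (1-y^2)^j * psi lam f f1 i y) has_real_derivative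
      (\<Sum>i\<le>j. A i * P i + B i * (if odd i then p * P i + q * P (Suc i) else P (Suc i)))) (at y)"
    unfolding A_def B_def P_def p_def q_def
    apply (rule DERIV_sum)
    apply (rule DERIV_cong[OF DERIV_mult[OF quot_deriv[OF dnz] psi_deriv[OF d1 d2]]])
    by (simp add: mult.commute)
  have "(\<Sum>i\<le>j. A i * P i + B i * (if odd i then p * P i + q * P (Suc i) else P (Suc i)))
      = (\<Sum>i\<le>j. (A i + (if odd i then B i * p else 0)) * P i) + (\<Sum>i\<le>j. B i * (if odd i then q else 1) * P (Suc i))"
    by (simp add: sum.distrib[symmetric] algebra_simps, rule sum.cong, auto simp: algebra_simps)
  also have "(\<Sum>i\<le>j. (A i + (if odd i then B i * p else 0)) * P i) = (\<Sum>i\<le>Suc j. (A i + (if odd i then B i * p else 0)) * P i)"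
    by (simp add: A_def B_def cc_zero)
  also have "(\<Sum>i\<le>j. B i * (if odd i then q else 1) * P (Suc i)) = (\<Sum>m\<le>Suc j. (if m = 0 then 0 else B (m-1) * (if odd (m-1) then q else 1)) * P m)"
    by (subst sum.atMost_Suc_shift) simp
  also have "(\<Sum>i\<le>Suc j. (A i + (if odd i then B i * p else 0)) * P i) + \<dots>
     = (\<Sum>i\<le>Suc j. poly (cc g h (Suc j) i) y / (1-y^2)^Suc j * psi lam f f1 i y)"
    unfolding sum.distrib[symmetric] P_def
    by (rule sum.cong[OF refl], unfold cc_Suc_val[OF dnz]) (simp add: A_def B_def p_def q_def algebra_simps)
  finally show ?thesis using dv by simp
qed

lemma expansion:
  assumes d1: "\<And>y. -1 < y \<Longrightarrow> y < 1 \<Longrightarrow> (f has_real_derivative f1 y) (at y)"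
    and d2: "\<And>y. -1 < y \<Longrightarrow> y < 1 \<Longrightarrow> (f1 has_real_derivative (poly (rp g h) y / (1-y^2) * f1 y + lam / (4*(1-y^2)) * f y)) (at y)"
  shows "-1 < y \<Longrightarrow> y < 1 \<Longrightarrow> (deriv ^^ j) f y = (\<Sum>i\<le>j. poly (cc g h j i) y / (1-y^2)^j * psi lam f f1 i y)"
proof (induction j arbitrary: y)
  case 0 thus ?case by (simp add: psi_def)
next
  case (Suc j)
  have "((\<lambda>y. \<Sum>i\<le>j. poly (cc g h j i) y / (1-y^2)^j * psi lam f f1 i y) has_real_derivative
          (\<Sum>i\<le>Suc j. poly (cc g h (Suc j) i) y / (1-y^2)^Suc j * psi lam f f1 i y)) (at y)"
    by (rule expansion_step[OF Suc.prems d1 d2]) (use Suc.prems in auto)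
  hence "((deriv ^^ j) f has_real_derivative
          (\<Sum>i\<le>Suc j. poly (cc g h (Suc j) i) y / (1-y^2)^Suc j * psi lam f f1 i y)) (at y)"
    by (rule has_field_derivative_transform_within_open[where S = "{-1<..<1}"]) (use Suc in auto)
  thus ?case by (simp add: DERIV_imp_deriv)
qed




lemma poly_ode_I:
  fixes a b :: real and m :: nat
  shows "t * poly (pderiv (pderiv (Jp a b m))) t - t^2 * poly (pderiv (pderiv (Jp a b m))) t
     + (a+1) * poly (pderiv (Jp a b m)) t - (a+b+2) * t * poly (pderiv (Jp a b m)) t
     + real m * (real m + a + b + 1) * poly (Jp a b m) t = 0"
proof -
  have "poly (pCons 0 (pderiv (pderiv (Jp a b m))) - pCons 0 (pCons 0 (pderiv (pderiv (Jp a b m)))) + smult (a+1) (pderiv (Jp a b m))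
     - smult (a+b+2) (pCons 0 (pderiv (Jp a b m))) + smult (real m * (real m + a + b + 1)) (Jp a b m)) t = 0"
    using Jp_ode[of a b m] by simp
  thus ?thesis by (simp add: power2_eq_square algebra_simps)
qed

lemma deriv_comp_t:
  "((\<lambda>y. poly p ((1 - y) / 2)) has_real_derivative (- poly (pderiv p) ((1 - y)/2) / 2)) (at y)"
  by (rule derivative_eq_intros refl poly_DERIV | simp)+



lemma yy_less: assumes "-1 < y" "y < (1::real)" shows "y * y < 1" "y^2 < 1" "1 - y^2 > 0" "1 - y^2 \<noteq> 0"
proof -
  have "0 < (1-y)*(1+y)" using assms by (intro mult_pos_pos) auto
  thus "y * y < 1" "y^2 < 1" "1 - y^2 > 0" "1 - y^2 \<noteq> 0" by (simp_all add: algebra_simps power2_eq_square)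
qed

lemma algI_ab:
  fixes a b U P0 P1 P2 g h v :: real
  assumes a: "a \<noteq> 0" and b: "b \<noteq> 0" and ab: "b = 2 - a"
  and ode: "(b/2) * P2 - (b/2)*(b/2) * P2 + ((g-1/2)+1) * P1 - ((g-1/2)+(1/2-h)+2) * (b/2) * P1
     + v * (v + (g-1/2) + (1/2-h) + 1) * P0 = 0"
  shows "(1/2-h)/a * U * ((1/2-h)/a * P0 - P1/2) + U * (- (1/2-h)/(a*a) * P0 - (1/2-h)/a * P1 / 2 + P2 / 4)
    = (g - h + (g+h+1)*(a - 1)) / (a*b) * (U * ((1/2-h)/a * P0 - P1/2)) + 4 * (g + v + 1/2) * (h - v - 1/2) / (4*(a*b)) * (U * P0)"
proof -
  have P2: "P2 * (b * a) = - 4 * (((g-1/2)+1) * P1 - ((g-1/2)+(1/2-h)+2) * (b/2) * P1 + v * (v + (g-1/2) + (1/2-h) + 1) * P0)"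
    using ode unfolding ab by (simp add: field_simps)
  have "(1/2-h)/a * U * ((1/2-h)/a * P0 - P1/2) + U * (- (1/2-h)/(a*a) * P0 - (1/2-h)/a * P1 / 2 + P2 / 4)
      = ((1/2-h) * U * ((1/2-h) * P0 - a * P1/2) * b + U * (- (1/2-h) * P0 * b - (1/2-h) * a * P1 * b / 2) + U * (P2 * (b * a)) * a / 4) / (a*a*b)"
    using a b by (simp add: field_simps)
  also have "\<dots> = (g - h + (g+h+1)*(a - 1)) / (a*b) * (U * ((1/2-h)/a * P0 - P1/2)) + 4 * (g + v + 1/2) * (h - v - 1/2) / (4*(a*b)) * (U * P0)"
    unfolding P2 using a b by (simp add: field_simps) (simp add: ab algebra_simps)
  finally show ?thesis .
qed
lemma algII_ab:
  fixes a b U P0 P1 P2 g h v :: real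
  assumes a: "a \<noteq> 0" and b: "b \<noteq> 0" and ab: "a = 2 - b"
  and ode: "(b/2) * P2 - (b/2)*(b/2) * P2 + ((1/2-g)+1) * P1 - ((1/2-g)+(h-1/2)+2) * (b/2) * P1
     + v * (v + (1/2-g) + (h-1/2) + 1) * P0 = 0"
  shows "-(1/2-g)/b * U * (-(1/2-g)/b * P0 - P1/2) + U * (- (1/2-g)/(b*b) * P0 + (1/2-g)/b * P1 / 2 + P2 / 4)
    = (g - h + (g+h+1)*(1 - b)) / (a*b) * (U * (-(1/2-g)/b * P0 - P1/2)) + 4 * (g - v - 1/2) * (h + v + 1/2) / (4*(a*b)) * (U * P0)"
proof -
  have P2: "P2 * (b * a) = - 4 * (((1/2-g)+1) * P1 - ((1/2-g)+(h-1/2)+2) * (b/2) * P1 + v * (v + (1/2-g) + (h-1/2) + 1) * P0)"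
    using ode unfolding ab by (simp add: field_simps)
  have "-(1/2-g)/b * U * (-(1/2-g)/b * P0 - P1/2) + U * (- (1/2-g)/(b*b) * P0 + (1/2-g)/b * P1 / 2 + P2 / 4)
      = (-(1/2-g) * U * (-(1/2-g) * P0 - b * P1/2) * a + U * (- (1/2-g) * P0 * a + (1/2-g) * b * P1 * a / 2) + U * (P2 * (b * a)) * b / 4) / (b*b*a)"
    using a b by (simp add: field_simps)
  also have "\<dots> = (g - h + (g+h+1)*(1 - b)) / (a*b) * (U * (-(1/2-g)/b * P0 - P1/2)) + 4 * (g - v - 1/2) * (h + v + 1/2) / (4*(a*b)) * (U * P0)"
    unfolding P2 using a b by (simp add: field_simps) (simp add: ab algebra_simps)
  finally show ?thesis .
qed

lemma algP_ab:
  fixes a b P0 P1 P2 g h n :: real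
  assumes a: "a \<noteq> 0" and b: "b \<noteq> 0" and ab: "b = 2 - a"
  and ode: "(b/2) * P2 - (b/2)*(b/2) * P2 + ((g-1/2)+1) * P1 - ((g-1/2)+(h-1/2)+2) * (b/2) * P1
     + n * (n + (g-1/2) + (h-1/2) + 1) * P0 = 0"
  shows "P2 / 4 = (g - h + (g+h+1)*(a - 1)) / (a*b) * (- P1/2) + - (4 * n * (n + g + h)) / (4*(a*b)) * P0"
proof -
  have P2: "P2 * (b * a) = - 4 * (((g-1/2)+1) * P1 - ((g-1/2)+(h-1/2)+2) * (b/2) * P1 + n * (n + (g-1/2) + (h-1/2) + 1) * P0)"
    using ode unfolding ab by (simp add: field_simps)
  have "P2 / 4 = P2 * (b * a) / (4 * a * b)" using a b by (simp add: field_simps)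
  also have "\<dots> = (g - h + (g+h+1)*(a - 1)) / (a*b) * (- P1/2) + - (4 * n * (n + g + h)) / (4*(a*b)) * P0"
    unfolding P2 using a b by (simp add: field_simps) (simp add: ab algebra_simps)
  finally show ?thesis .
qed



definition f1I :: "real \<Rightarrow> real \<Rightarrow> nat \<Rightarrow> real \<Rightarrow> real" where
  "f1I g h v y = ((1+y)/2) powr (1/2 - h) * ((1/2 - h)/(1+y) * poly (Jp (g-1/2) (1/2-h) v) ((1-y)/2)
      - poly (pderiv (Jp (g-1/2) (1/2-h) v)) ((1-y)/2) / 2)"

definition f1II :: "real \<Rightarrow> real \<Rightarrow> nat \<Rightarrow> real \<Rightarrow> real" where
  "f1II g h v y = ((1-y)/2) powr (1/2 - g) * (- (1/2 - g)/(1-y) * poly (Jp (1/2-g) (h-1/2) v) ((1-y)/2)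
      - poly (pderiv (Jp (1/2-g) (h-1/2) v)) ((1-y)/2) / 2)"

definition f1P :: "real \<Rightarrow> real \<Rightarrow> nat \<Rightarrow> real \<Rightarrow> real" where
  "f1P g h n y = - poly (pderiv (Jp (g-1/2) (h-1/2) n)) ((1-y)/2) / 2"

lemma mu_I_eq: "mu g h (v, TI) = (\<lambda>y. ((1+y)/2) powr (1/2 - h) * poly (Jp (g-1/2) (1/2-h) v) ((1-y)/2))"
  by (simp add: fun_eq_iff mu_def jacobiP_poly)

lemma mu_II_eq: "mu g h (v, TII) = (\<lambda>y. ((1-y)/2) powr (1/2 - g) * poly (Jp (1/2-g) (h-1/2) v) ((1-y)/2))"
  by (simp add: fun_eq_iff mu_def jacobiP_poly)

lemma Pn_eq: "Pn g h n = (\<lambda>y. poly (Jp (g-1/2) (h-1/2) n) ((1-y)/2))"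
  by (simp add: fun_eq_iff Pn_def jacobiP_poly)

lemma dUp:
  assumes "-1 < y"
  shows "((\<lambda>y. ((1 + y)/2) powr e) has_real_derivative (e / (1 + y) * ((1 + y)/2) powr e)) (at y)"
proof -
  have pos: "0 < (1 + y)/2" using assms by simp
  have d: "((\<lambda>y. ((1 + y)/2) powr e) has_real_derivative e * ((1 + y)/2) powr (e - real 1) * (1/2)) (at y)"
    by (rule DERIV_fun_powr[where g = "\<lambda>y. (1 + y)/2", OF _ pos]) (rule derivative_eq_intros refl | simp)+
  have eq: "e * ((1 + y)/2) powr (e - real 1) * (1/2) = e / (1 + y) * ((1 + y)/2) powr e"
    using pos by (simp add: powr_diff field_simps)
  show ?thesis by (rule DERIV_cong[OF d eq])
qed

lemma dUm:
  assumes "y < 1"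
  shows "((\<lambda>y. ((1 - y)/2) powr e) has_real_derivative (- e / (1 - y) * ((1 - y)/2) powr e)) (at y)"
proof -
  have pos: "0 < (1 - y)/2" using assms by simp
  have d: "((\<lambda>y. ((1 - y)/2) powr e) has_real_derivative e * ((1 - y)/2) powr (e - real 1) * (-1/2)) (at y)"
    by (rule DERIV_fun_powr[where g = "\<lambda>y. (1 - y)/2", OF _ pos]) (rule derivative_eq_intros refl | simp)+
  have eq: "e * ((1 - y)/2) powr (e - real 1) * (-1/2) = - e / (1 - y) * ((1 - y)/2) powr e"
    using pos by (simp add: powr_diff field_simps)
  show ?thesis by (rule DERIV_cong[OF d eq])
qed

lemma typeI_d1:
  assumes y: "-1 < y" "y < 1"
  shows "(mu g h (v, TI) has_real_derivative f1I g h v y) (at y)"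
  unfolding mu_I_eq f1I_def
  by (rule DERIV_cong[OF DERIV_mult[OF dUp[OF y(1)] deriv_comp_t]]) (simp add: algebra_simps)

lemma typeI_d2:
  assumes y: "-1 < y" "y < 1"
  shows "(f1I g h v has_real_derivative (poly (rp g h) y / (1-y^2) * f1I g h v y
      + (- Etil g h (v, TI)) / (4*(1-y^2)) * mu g h (v, TI) y)) (at y)"
proof -
  define P where "P = Jp (g-1/2) (1/2-h) v"
  define U where "U = ((1+y)/2) powr (1/2 - h)"
  define P0 where "P0 = poly P ((1-y)/2)"
  define P1 where "P1 = poly (pderiv P) ((1-y)/2)"
  define P2 where "P2 = poly (pderiv (pderiv P)) ((1-y)/2)"
  have dK: "((\<lambda>y. (1/2 - h)/(1+y) * poly P ((1-y)/2) - poly (pderiv P) ((1-y)/2) / 2) has_real_derivative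
     (- (1/2-h)/((1+y)*(1+y)) * P0 - (1/2-h)/(1+y) * P1 / 2 + P2 / 4)) (at y)"
  proof -
    have d1: "((\<lambda>y. (1/2 - h)/(1+y)) has_real_derivative - (1/2-h)/((1+y)*(1+y))) (at y)"
      apply (rule DERIV_cong)
      apply (rule derivative_eq_intros refl | use y in simp)+
      done
    show ?thesis unfolding P0_def P1_def P2_def
      by (rule DERIV_cong[OF DERIV_diff[OF DERIV_mult[OF d1 deriv_comp_t] DERIV_cdivide[OF deriv_comp_t]]])
         (simp add: algebra_simps)
  qed
  have ode: "((1-y)/2) * P2 - ((1-y)/2)*((1-y)/2) * P2 + ((g-1/2)+1) * P1 - ((g-1/2)+(1/2-h)+2) * ((1-y)/2) * P1
     + real v * (real v + (g-1/2) + (1/2-h) + 1) * P0 = 0"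
    using poly_ode_I[of "(1-y)/2" "g-1/2" "1/2-h" v] unfolding P_def P0_def P1_def P2_def by (simp add: power2_eq_square)
  have a: "1 + y \<noteq> 0" "1 - y \<noteq> 0" using y by auto
  note alg = algI_ab[where a = "1+y" and b = "1-y" and U = U, OF a _ ode]
  have e1: "1 - y^2 = (1+y)*(1-y)" by (simp add: power2_eq_square algebra_simps)
  have mu: "mu g h (v, TI) y = U * P0" unfolding mu_I_eq U_def P0_def P_def by simp
  have f1: "f1I g h v y = U * ((1/2 - h)/(1+y) * P0 - P1 / 2)" unfolding f1I_def U_def P0_def P1_def P_def by simp
  have D: "(f1I g h v has_real_derivative ((1/2-h)/(1+y) * U) * ((1/2-h)/(1+y) * P0 - P1/2) + (- (1/2-h)/((1+y)*(1+y)) * P0 - (1/2-h)/(1+y) * P1 / 2 + P2 / 4) * U) (at y)"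
    unfolding f1I_def P_def[symmetric] U_def P0_def P1_def P2_def
    by (rule DERIV_mult[OF dUp[OF y(1)] dK[unfolded P0_def P1_def P2_def]])
  have "((1/2-h)/(1+y) * U) * ((1/2-h)/(1+y) * P0 - P1/2) + (- (1/2-h)/((1+y)*(1+y)) * P0 - (1/2-h)/(1+y) * P1 / 2 + P2 / 4) * U
      = (1/2-h)/(1+y) * U * ((1/2-h)/(1+y) * P0 - P1/2) + U * (- (1/2-h)/((1+y)*(1+y)) * P0 - (1/2-h)/(1+y) * P1 / 2 + P2 / 4)"
    by (simp only: mult.commute)
  also have "\<dots> = (g - h + (g+h+1)*((1+y) - 1)) / ((1+y)*(1-y)) * (U * ((1/2-h)/(1+y) * P0 - P1/2)) + 4 * (g + real v + 1/2) * (h - real v - 1/2) / (4*((1+y)*(1-y))) * (U * P0)"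
    by (rule alg) (simp add: a)
  also have "\<dots> = poly (rp g h) y / (1-y^2) * f1I g h v y + (- Etil g h (v, TI)) / (4*(1-y^2)) * mu g h (v, TI) y"
  proof -
    have eE: "- Etil g h (v, TI) = 4 * (g + real v + 1/2) * (h - real v - 1/2)" by (simp add: Etil_def algebra_simps)
    have ep: "poly (rp g h) y = g - h + (g+h+1)*((1+y) - 1)" by simp
    show ?thesis unfolding f1 mu e1 eE ep ..
  qed
  finally show ?thesis using D by simp
qed

lemma typeII_d1:
  assumes y: "-1 < y" "y < 1"
  shows "(mu g h (v, TII) has_real_derivative f1II g h v y) (at y)"
  unfolding mu_II_eq f1II_def
  by (rule DERIV_cong[OF DERIV_mult[OF dUm[OF y(2)] deriv_comp_t]]) (simp add: algebra_simps)

lemma typeII_d2: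
  assumes y: "-1 < y" "y < 1"
  shows "(f1II g h v has_real_derivative (poly (rp g h) y / (1-y^2) * f1II g h v y
      + (- Etil g h (v, TII)) / (4*(1-y^2)) * mu g h (v, TII) y)) (at y)"
proof -
  define P where "P = Jp (1/2-g) (h-1/2) v"
  define U where "U = ((1-y)/2) powr (1/2 - g)"
  define P0 where "P0 = poly P ((1-y)/2)"
  define P1 where "P1 = poly (pderiv P) ((1-y)/2)"
  define P2 where "P2 = poly (pderiv (pderiv P)) ((1-y)/2)"
  have dK: "((\<lambda>y. - (1/2 - g)/(1-y) * poly P ((1-y)/2) - poly (pderiv P) ((1-y)/2) / 2) has_real_derivative
     (- (1/2-g)/((1-y)*(1-y)) * P0 + (1/2-g)/(1-y) * P1 / 2 + P2 / 4)) (at y)"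
  proof -
    have d1: "((\<lambda>y. - (1/2 - g)/(1-y)) has_real_derivative - (1/2-g)/((1-y)*(1-y))) (at y)"
      apply (rule DERIV_cong)
      apply (rule derivative_eq_intros refl | use y in simp)+
      done
    show ?thesis unfolding P0_def P1_def P2_def
      by (rule DERIV_cong[OF DERIV_diff[OF DERIV_mult[OF d1 deriv_comp_t] DERIV_cdivide[OF deriv_comp_t]]])
         (use y in \<open>auto simp: field_simps\<close>)
  qed
  have ode: "((1-y)/2) * P2 - ((1-y)/2)*((1-y)/2) * P2 + ((1/2-g)+1) * P1 - ((1/2-g)+(h-1/2)+2) * ((1-y)/2) * P1
     + real v * (real v + (1/2-g) + (h-1/2) + 1) * P0 = 0"
    using poly_ode_I[of "(1-y)/2" "1/2-g" "h-1/2" v] unfolding P_def P0_def P1_def P2_def by (simp add: power2_eq_square)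
  have a: "1 + y \<noteq> 0" "1 - y \<noteq> 0" using y by auto
  note alg = algII_ab[where a = "1+y" and b = "1-y" and U = U, OF a _ ode]
  have e1: "1 - y^2 = (1+y)*(1-y)" by (simp add: power2_eq_square algebra_simps)
  have mu: "mu g h (v, TII) y = U * P0" unfolding mu_II_eq U_def P0_def P_def by simp
  have f1: "f1II g h v y = U * (- (1/2 - g)/(1-y) * P0 - P1 / 2)" unfolding f1II_def U_def P0_def P1_def P_def by simp
  have D: "(f1II g h v has_real_derivative (- (1/2-g)/(1-y) * U) * (- (1/2-g)/(1-y) * P0 - P1/2) + (- (1/2-g)/((1-y)*(1-y)) * P0 + (1/2-g)/(1-y) * P1 / 2 + P2 / 4) * U) (at y)"
    unfolding f1II_def P_def[symmetric] U_def P0_def P1_def P2_def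
    by (rule DERIV_mult[OF dUm[OF y(2)] dK[unfolded P0_def P1_def P2_def]])
  have "(- (1/2-g)/(1-y) * U) * (- (1/2-g)/(1-y) * P0 - P1/2) + (- (1/2-g)/((1-y)*(1-y)) * P0 + (1/2-g)/(1-y) * P1 / 2 + P2 / 4) * U
      = - (1/2-g)/(1-y) * U * (- (1/2-g)/(1-y) * P0 - P1/2) + U * (- (1/2-g)/((1-y)*(1-y)) * P0 + (1/2-g)/(1-y) * P1 / 2 + P2 / 4)"
    by (simp only: mult.commute)
  also have "\<dots> = (g - h + (g+h+1)*(1 - (1-y))) / ((1+y)*(1-y)) * (U * (- (1/2-g)/(1-y) * P0 - P1/2)) + 4 * (g - real v - 1/2) * (h + real v + 1/2) / (4*((1+y)*(1-y))) * (U * P0)"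
    by (rule alg) (simp add: a)
  also have "\<dots> = poly (rp g h) y / (1-y^2) * f1II g h v y + (- Etil g h (v, TII)) / (4*(1-y^2)) * mu g h (v, TII) y"
  proof -
    have eE: "- Etil g h (v, TII) = 4 * (g - real v - 1/2) * (h + real v + 1/2)" by (simp add: Etil_def algebra_simps)
    have ep: "poly (rp g h) y = g - h + (g+h+1)*(1 - (1-y))" by simp
    show ?thesis unfolding f1 mu e1 eE ep ..
  qed
  finally show ?thesis using D by simp
qed

lemma typeP_d1:
  shows "(Pn g h n has_real_derivative f1P g h n y) (at y)"
  unfolding Pn_eq f1P_def by (rule deriv_comp_t)

lemma typeP_d2:
  assumes y: "-1 < y" "y < 1"
  shows "(f1P g h n has_real_derivative (poly (rp g h) y / (1-y^2) * f1P g h n y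
      + (- En g h n) / (4*(1-y^2)) * Pn g h n y)) (at y)"
proof -
  define P where "P = Jp (g-1/2) (h-1/2) n"
  define P0 where "P0 = poly P ((1-y)/2)"
  define P1 where "P1 = poly (pderiv P) ((1-y)/2)"
  define P2 where "P2 = poly (pderiv (pderiv P)) ((1-y)/2)"
  have D: "(f1P g h n has_real_derivative (- (- P2 / 2)) / 2) (at y)"
    unfolding f1P_def P_def[symmetric] P2_def
    by (rule DERIV_cdivide[OF DERIV_minus[OF deriv_comp_t]])
  have ode: "((1-y)/2) * P2 - ((1-y)/2)*((1-y)/2) * P2 + ((g-1/2)+1) * P1 - ((g-1/2)+(h-1/2)+2) * ((1-y)/2) * P1
     + real n * (real n + (g-1/2) + (h-1/2) + 1) * P0 = 0"
    using poly_ode_I[of "(1-y)/2" "g-1/2" "h-1/2" n] unfolding P_def P0_def P1_def P2_def by (simp add: power2_eq_square)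
  have a: "1 + y \<noteq> 0" "1 - y \<noteq> 0" using y by auto
  note alg = algP_ab[where a = "1+y" and b = "1-y", OF a _ ode]
  have e1: "1 - y^2 = (1+y)*(1-y)" by (simp add: power2_eq_square algebra_simps)
  have "(- (- P2 / 2)) / 2 = P2 / 4" by simp
  also have "\<dots> = (g - h + (g+h+1)*((1+y) - 1)) / ((1+y)*(1-y)) * (- P1/2) + - (4 * real n * (real n + g + h)) / (4*((1+y)*(1-y))) * P0"
    by (rule alg) simp
  also have "\<dots> = poly (rp g h) y / (1-y^2) * f1P g h n y + (- En g h n) / (4*(1-y^2)) * Pn g h n y"
  proof -
    have ep: "poly (rp g h) y = g - h + (g+h+1)*((1+y) - 1)" by simp
    have f1: "f1P g h n y = - P1 / 2" unfolding f1P_def P1_def P_def by simp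
    have p: "Pn g h n y = P0" unfolding Pn_eq P0_def P_def by simp
    show ?thesis unfolding f1 p e1 ep En_def ..
  qed
  finally have eq: "(- (- P2 / 2)) / 2 = poly (rp g h) y / (1-y^2) * f1P g h n y + (- En g h n) / (4*(1-y^2)) * Pn g h n y" .
  show ?thesis by (rule DERIV_cong[OF D eq])
qed




lemma Jp_cong: "a = a' \<Longrightarrow> b = b' \<Longrightarrow> Jp a b m = Jp a' b' m" by simp

lemma valI:
  assumes y: "-1 < y" "y < 1"
  shows "f1I g h v y = - (((1+y)/2) powr (1/2 - h) * zetatil g h (v, TI) y) / (1 - y^2)"
proof -
  define U where "U = ((1+y)/2) powr (1/2 - h)"
  define P0 where "P0 = poly (Jp (g-1/2) (1/2-h) v) ((1-y)/2)"
  define P1 where "P1 = poly (pderiv (Jp (g-1/2) (1/2-h) v)) ((1-y)/2)"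
  define Q0 where "Q0 = poly (Jp (g+1/2) (-h-1/2) v) ((1-y)/2)"
  have J: "Jp (g - 1/2 + 1) (1/2 - h - 1) v = Jp (g+1/2) (-h-1/2) v" by (rule Jp_cong) simp_all
  have h0: "- P1 + ((1-y)/2) * P1 + (1/2-h) * P0 = (1/2 - h + real v) * Q0"
    using arg_cong[OF Jp_I[of "g-1/2" "1/2-h" v], of "\<lambda>p. poly p ((1-y)/2)"]
    unfolding J P0_def P1_def Q0_def by simp
  have a: "1 + y \<noteq> 0" "1 - y \<noteq> 0" using y by auto
  have e1: "1 - y^2 = (1+y)*(1-y)" by (simp add: power2_eq_square algebra_simps)
  have z: "zetatil g h (v, TI) y = (h - 1/2 - real v) * (1 - y) * Q0"
    unfolding zetatil_def Q0_def by (simp add: jacobiP_poly)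
  have f: "f1I g h v y = U * ((1/2 - h)/(1+y) * P0 - P1 / 2)"
    unfolding f1I_def U_def P0_def P1_def ..
  have alg: "\<And>a b U P0 P1 Q0 h v :: real. a \<noteq> 0 \<Longrightarrow> b \<noteq> 0 \<Longrightarrow> a = 2 - b \<Longrightarrow>
     - P1 + (b/2) * P1 + (1/2-h) * P0 = (1/2 - h + v) * Q0 \<Longrightarrow>
     U * ((1/2 - h)/a * P0 - P1 / 2) = - (U * ((h - 1/2 - v) * b * Q0)) / (a * b)"
  proof -
    fix a b U P0 P1 Q0 h v :: real
    assume a: "a \<noteq> 0" and b: "b \<noteq> 0" and ab: "a = 2 - b" and e: "- P1 + (b/2) * P1 + (1/2-h) * P0 = (1/2 - h + v) * Q0"
    have aP: "a * P1 / 2 = P1 - b/2 * P1" unfolding ab by (simp add: field_simps)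
    have e': "(1/2-h) * P0 - a * P1 / 2 = (1/2 - h + v) * Q0" using e aP by linarith
    have "U * ((1/2 - h)/a * P0 - P1 / 2) = U * (((1/2-h) * P0 - a * P1 / 2) / a)" using a by (simp add: field_simps)
    also have "\<dots> = - (U * ((h - 1/2 - v) * b * Q0)) / (a * b)" unfolding e' using a b by (simp add: field_simps)
    finally show "U * ((1/2 - h)/a * P0 - P1 / 2) = - (U * ((h - 1/2 - v) * b * Q0)) / (a * b)" .
  qed
  show ?thesis unfolding f z e1 U_def[symmetric]
    by (rule alg[OF a]) (use h0 in simp_all)
qed

lemma valII:
  assumes y: "-1 < y" "y < 1"
  shows "f1II g h v y = - (((1-y)/2) powr (1/2 - g) * zetatil g h (v, TII) y) / (1 - y^2)"
proof -
  define U where "U = ((1-y)/2) powr (1/2 - g)"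
  define P0 where "P0 = poly (Jp (1/2-g) (h-1/2) v) ((1-y)/2)"
  define P1 where "P1 = poly (pderiv (Jp (1/2-g) (h-1/2) v)) ((1-y)/2)"
  define Q0 where "Q0 = poly (Jp (-g-1/2) (h+1/2) v) ((1-y)/2)"
  have J: "Jp (1/2 - g - 1) (h - 1/2 + 1) v = Jp (-g-1/2) (h+1/2) v" by (rule Jp_cong) simp_all
  have h0: "((1-y)/2) * P1 + (1/2-g) * P0 = (1/2 - g + real v) * Q0"
    using arg_cong[OF Jp_II[of "1/2-g" "h-1/2" v], of "\<lambda>p. poly p ((1-y)/2)"]
    unfolding J P0_def P1_def Q0_def by simp
  have a: "1 + y \<noteq> 0" "1 - y \<noteq> 0" using y by auto
  have e1: "1 - y^2 = (1+y)*(1-y)" by (simp add: power2_eq_square algebra_simps)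
  have z: "zetatil g h (v, TII) y = - (g - 1/2 - real v) * (1 + y) * Q0"
    unfolding zetatil_def Q0_def by (simp add: jacobiP_poly)
  have f: "f1II g h v y = U * (- (1/2 - g)/(1-y) * P0 - P1 / 2)"
    unfolding f1II_def U_def P0_def P1_def ..
  have alg: "\<And>a b U P0 P1 Q0 g v :: real. a \<noteq> 0 \<Longrightarrow> b \<noteq> 0 \<Longrightarrow>
     (b/2) * P1 + (1/2-g) * P0 = (1/2 - g + v) * Q0 \<Longrightarrow>
     U * (- (1/2 - g)/b * P0 - P1 / 2) = - (U * (- (g - 1/2 - v) * a * Q0)) / (a * b)"
  proof -
    fix a b U P0 P1 Q0 g v :: real
    assume a: "a \<noteq> 0" and b: "b \<noteq> 0" and e: "(b/2) * P1 + (1/2-g) * P0 = (1/2 - g + v) * Q0"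
    have "U * (- (1/2 - g)/b * P0 - P1 / 2) = - U * (((b/2) * P1 + (1/2-g) * P0) / b)" using b by (simp add: field_simps)
    also have "\<dots> = - (U * (- (g - 1/2 - v) * a * Q0)) / (a * b)" unfolding e using a b by (simp add: field_simps)
    finally show "U * (- (1/2 - g)/b * P0 - P1 / 2) = - (U * (- (g - 1/2 - v) * a * Q0)) / (a * b)" .
  qed
  show ?thesis unfolding f z e1 U_def[symmetric]
    by (rule alg[OF a]) (use h0 in simp_all)
qed

lemma valP:
  assumes y: "-1 < y" "y < 1"
  shows "f1P g h n y = - zetan g h n y / (1 - y^2)"
proof (cases n)
  case 0
  have "pderiv (Jp (g-1/2) (h-1/2) 0) = 0" unfolding Jp_def by (simp add: monom_0 pderiv_pCons)
  thus ?thesis using 0 unfolding f1P_def zetan_def jacobiP_def by simp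
next
  case (Suc m)
  have J: "Jp (g - 1/2 + 1) (h - 1/2 + 1) m = Jp (g+1/2) (h+1/2) m" by (rule Jp_cong) simp_all
  have d: "pderiv (Jp (g-1/2) (h-1/2) n) = smult (- (real m + (g-1/2) + (h-1/2) + 2)) (Jp (g+1/2) (h+1/2) m)"
    unfolding Suc Jp_deriv J ..
  have i: "int n - 1 = int m" using Suc by simp
  have nz: "1 - y^2 \<noteq> 0"
  proof -
    have "0 < (1-y)*(1+y)" using y by (intro mult_pos_pos) auto
    thus ?thesis by (simp add: power2_eq_square algebra_simps)
  qed
  show ?thesis unfolding f1P_def zetan_def d i jacobiP_poly using nz Suc by (simp add: field_simps)
qed




lemma cc_diag_poly: "cc g h (Suc j) (Suc j) = (if odd j then smult (1/4) (cc g h j j) else cc g h j j * Dp)"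
  by (simp add: cc_zero)

lemma cc_diag:
  assumes d: "1 - y^2 \<noteq> 0"
  shows "poly (cc g h j j) y / (1 - y^2) ^ j = (1 / (4 * (1 - y^2))) ^ (j div 2)"
proof (induction j)
  case 0 thus ?case by simp
next
  case (Suc j)
  show ?case
  proof (cases "odd j")
    case True
    have e: "Suc j div 2 = Suc (j div 2)" using True by presburger
    have "poly (cc g h (Suc j) (Suc j)) y / (1 - y^2) ^ Suc j = (poly (cc g h j j) y / (1 - y^2) ^ j) * (1 / (4 * (1 - y^2)))"
      unfolding cc_diag_poly using True d by (simp add: field_simps)
    thus ?thesis unfolding Suc e by simp
  next
    case False
    have e: "Suc j div 2 = j div 2" using False by presburger
    have "poly (cc g h (Suc j) (Suc j)) y / (1 - y^2) ^ Suc j = (poly (cc g h j j) y / (1 - y^2) ^ j)"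
      unfolding cc_diag_poly using False d by (simp add: field_simps)
    thus ?thesis unfolding Suc e by simp
  qed
qed

lemma det_lower_mat:
  assumes "\<And>i j. i < j \<Longrightarrow> j < n \<Longrightarrow> L i j = 0"
  shows "det (mat n n (\<lambda>(i,j). L i j)) = (\<Prod>i<n. L i i)"
proof -
  have "det (mat n n (\<lambda>(i,j). L i j)) = prod_list (diag_mat (mat n n (\<lambda>(i,j). L i j)))"
    by (rule det_lower_triangular[of n]) (use assms in auto)
  also have "\<dots> = (\<Prod>i<n. L i i)" unfolding prod_list_diag_prod by (simp add: atLeast0LessThan)
  finally show ?thesis .
qed

lemma det_scale:
  fixes A :: "real mat"
  assumes A: "A \<in> carrier_mat n n"
  shows "det (mat n n (\<lambda>(i,k). r i * A $$ (i,k) * s k)) = (\<Prod>i<n. r i) * (\<Prod>k<n. s k) * det A"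
proof -
  let ?B = "mat n n (\<lambda>(i,k). r i * A $$ (i,k) * s k)"
  have B: "?B \<in> carrier_mat n n" by simp
  have "det ?B = (\<Sum>p | p permutes {0..<n}. of_int (sign p) * (\<Prod>i = 0..<n. ?B $$ (i, p i)))"
    by (rule det_def'[OF B])
  also have "\<dots> = (\<Sum>p | p permutes {0..<n}. (\<Prod>i<n. r i) * (\<Prod>k<n. s k) * (of_int (sign p) * (\<Prod>i = 0..<n. A $$ (i, p i))))"
  proof (rule sum.cong[OF refl])
    fix p assume "p \<in> {p. p permutes {0..<n}}"
    hence p: "p permutes {0..<n}" by simp
    have pi: "\<And>i. i < n \<Longrightarrow> p i < n" using p by (simp add: permutes_in_image)
    have "(\<Prod>i = 0..<n. ?B $$ (i, p i)) = (\<Prod>i = 0..<n. r i * A $$ (i, p i) * s (p i))"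
      by (rule prod.cong[OF refl]) (simp add: pi)
    also have "\<dots> = (\<Prod>i = 0..<n. r i) * (\<Prod>i = 0..<n. A $$ (i, p i)) * (\<Prod>i = 0..<n. s (p i))"
      by (simp add: prod.distrib)
    also have "(\<Prod>i = 0..<n. s (p i)) = (\<Prod>i = 0..<n. s i)"
      using prod.permute[OF p, of s] by (simp add: comp_def)
    finally show "of_int (sign p) * (\<Prod>i = 0..<n. ?B $$ (i, p i)) = (\<Prod>i<n. r i) * (\<Prod>k<n. s k) * (of_int (sign p) * (\<Prod>i = 0..<n. A $$ (i, p i)))"
      by (simp add: atLeast0LessThan algebra_simps)
  qed
  also have "\<dots> = (\<Prod>i<n. r i) * (\<Prod>k<n. s k) * det A"
    unfolding det_def'[OF A] by (simp add: sum_distrib_left)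
  finally show ?thesis .
qed




lemma wronskian_factor:
  fixes fs :: "(real \<Rightarrow> real) list" and f1 :: "nat \<Rightarrow> real \<Rightarrow> real" and lam F xx zz :: "nat \<Rightarrow> real"
  assumes x: "-1 < x" "x < 1"
    and d1: "\<And>k y. k < length fs \<Longrightarrow> -1 < y \<Longrightarrow> y < 1 \<Longrightarrow> (fs ! k has_real_derivative f1 k y) (at y)"
    and d2: "\<And>k y. k < length fs \<Longrightarrow> -1 < y \<Longrightarrow> y < 1 \<Longrightarrow>
       (f1 k has_real_derivative (poly (rp g h) y / (1-y^2) * f1 k y + lam k / (4*(1-y^2)) * (fs ! k) y)) (at y)"
    and v0: "\<And>k. k < length fs \<Longrightarrow> (fs ! k) x = F k * xx k"
    and v1: "\<And>k. k < length fs \<Longrightarrow> f1 k x = - (F k * zz k) / (1 - x^2)"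
  shows "wronskian fs x = (\<Prod>j<length fs. (1 / (4*(1-x^2))) ^ (j div 2) * (if even j then 1 else - 1 / (1-x^2)))
      * (\<Prod>k<length fs. F k) * det (mat (length fs) (length fs) (\<lambda>(i,k). lam k ^ (i div 2) * (if even i then xx k else zz k)))"
proof -
  define N where "N = length fs"
  have dnz: "1 - x^2 \<noteq> 0"
  proof -
    have "0 < (1-x)*(1+x)" using x by (intro mult_pos_pos) auto
    thus ?thesis by (simp add: power2_eq_square algebra_simps)
  qed
  define L where "L j i = poly (cc g h j i) x / (1 - x^2) ^ j" for j i
  define C where "C i k = psi (lam k) (fs ! k) (f1 k) i x" for i k
  define A where "A = mat N N (\<lambda>(i,k). lam k ^ (i div 2) * (if even i then xx k else zz k))"
  define R where "R i = (if even i then 1 else - 1 / (1-x^2))" for i :: nat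
  have W: "mat N N (\<lambda>(j,k). (deriv ^^ j) (fs ! k) x) = mat N N (\<lambda>(j,i). L j i) * mat N N (\<lambda>(i,k). C i k)"
  proof (rule eq_matI)
    fix j k assume j: "j < dim_row (mat N N (\<lambda>(j,i). L j i) * mat N N (\<lambda>(i,k). C i k))"
      and k: "k < dim_col (mat N N (\<lambda>(j,i). L j i) * mat N N (\<lambda>(i,k). C i k))"
    hence j: "j < N" and k: "k < N" by simp_all
    have "(deriv ^^ j) (fs ! k) x = (\<Sum>i\<le>j. L j i * C i k)"
      unfolding L_def C_def
      by (rule expansion[OF d1 d2]) (use k x N_def in auto)
    also have "\<dots> = (\<Sum>i\<in>{0..<N}. L j i * C i k)"
      by (rule sum.mono_neutral_left) (use j in \<open>auto simp: L_def cc_zero\<close>)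
    also have "\<dots> = (mat N N (\<lambda>(j,i). L j i) * mat N N (\<lambda>(i,k). C i k)) $$ (j, k)"
      using j k by (simp add: scalar_prod_def)
    finally show "mat N N (\<lambda>(j,k). (deriv ^^ j) (fs ! k) x) $$ (j, k) = (mat N N (\<lambda>(j,i). L j i) * mat N N (\<lambda>(i,k). C i k)) $$ (j, k)"
      using j k by simp
  qed auto
  have dL: "det (mat N N (\<lambda>(j,i). L j i)) = (\<Prod>j<N. (1 / (4*(1-x^2))) ^ (j div 2))"
    by (subst det_lower_mat) (auto simp: L_def cc_zero cc_diag[OF dnz])
  have Cm: "mat N N (\<lambda>(i,k). C i k) = mat N N (\<lambda>(i,k). R i * A $$ (i,k) * F k)"
  proof (rule eq_matI)
    fix i k assume "i < dim_row (mat N N (\<lambda>(i,k). R i * A $$ (i,k) * F k))" "k < dim_col (mat N N (\<lambda>(i,k). R i * A $$ (i,k) * F k))"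
    hence i: "i < N" and k: "k < N" by simp_all
    show "mat N N (\<lambda>(i,k). C i k) $$ (i,k) = mat N N (\<lambda>(i,k). R i * A $$ (i,k) * F k) $$ (i,k)"
      using i k v0[of k] v1[of k] dnz unfolding N_def
      by (simp add: C_def psi_def R_def A_def N_def field_simps)
  qed auto
  have dC: "det (mat N N (\<lambda>(i,k). C i k)) = (\<Prod>i<N. R i) * (\<Prod>k<N. F k) * det A"
    unfolding Cm by (rule det_scale) (simp add: A_def)
  have "wronskian fs x = det (mat N N (\<lambda>(j,i). L j i)) * det (mat N N (\<lambda>(i,k). C i k))"
    unfolding wronskian_def N_def[symmetric] W by (rule det_mult) auto
  also have "\<dots> = (\<Prod>j<N. (1 / (4*(1-x^2))) ^ (j div 2) * R j) * (\<Prod>k<N. F k) * det A"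
    unfolding dL dC by (simp add: prod.distrib)
  finally show ?thesis unfolding N_def R_def A_def .
qed




definition f1S :: "real \<Rightarrow> real \<Rightarrow> nat \<times> seedtype \<Rightarrow> real \<Rightarrow> real" where
  "f1S g h d = (case d of (v, TI) \<Rightarrow> f1I g h v | (v, TII) \<Rightarrow> f1II g h v)"
definition gS :: "real \<Rightarrow> real \<Rightarrow> nat \<times> seedtype \<Rightarrow> real \<Rightarrow> real" where
  "gS g h d x = (case d of (v, TI) \<Rightarrow> ((1+x)/2) powr (1/2 - h) | (v, TII) \<Rightarrow> ((1-x)/2) powr (1/2 - g))"

lemma seed_d1: "-1 < y \<Longrightarrow> y < 1 \<Longrightarrow> (mu g h d has_real_derivative f1S g h d y) (at y)"
  by (cases d; cases "snd d") (auto simp: f1S_def typeI_d1 typeII_d1)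

lemma seed_d2: "-1 < y \<Longrightarrow> y < 1 \<Longrightarrow> (f1S g h d has_real_derivative
   (poly (rp g h) y / (1-y^2) * f1S g h d y + (- Etil g h d) / (4*(1-y^2)) * mu g h d y)) (at y)"
proof -
  assume y: "-1 < y" "y < 1"
  obtain v t where d: "d = (v, t)" by force
  show ?thesis
  proof (cases t)
    case TI thus ?thesis unfolding d using typeI_d2[OF y, of g h v] by (simp add: f1S_def)
  next
    case TII thus ?thesis unfolding d using typeII_d2[OF y, of g h v] by (simp add: f1S_def)
  qed
qed

lemma seed_v0: "mu g h d x = gS g h d x * xi g h d x"
  by (cases d; cases "snd d") (auto simp: gS_def mu_def xi_def)

lemma seed_v1: "-1 < x \<Longrightarrow> x < 1 \<Longrightarrow> f1S g h d x = - (gS g h d x * zetatil g h d x) / (1 - x^2)"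
  by (cases d; cases "snd d") (auto simp: gS_def f1S_def valI valII)

lemma MI_Cons: "MI (d # D) = (if snd d = TI then 1 else 0) + MI D" by (simp add: MI_def)
lemma MII_Cons: "MII (d # D) = (if snd d = TII then 1 else 0) + MII D" by (simp add: MII_def)
lemma MI_MII: "MI D + MII D = length D"
proof (induction D)
  case Nil thus ?case by (simp add: MI_def MII_def)
next
  case (Cons d D) thus ?case by (cases "snd d") (simp_all add: MI_Cons MII_Cons)
qed

lemma gauge_prod:
  assumes x: "-1 < x" "x < 1"
  shows "(\<Prod>k<length D. gS g h (D ! k) x) = ((1+x)/2) powr ((1/2 - h) * real (MI D)) * ((1-x)/2) powr ((1/2 - g) * real (MII D))"
proof (induction D)
  case Nil thus ?case using x by (simp add: MI_def MII_def)
next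
  case (Cons d D)
  have u: "(1+x)/2 > 0" "(1-x)/2 > 0" using x by auto
  have "(\<Prod>k<length (d # D). gS g h ((d # D) ! k) x) = gS g h d x * (\<Prod>k<length D. gS g h (D ! k) x)"
    by (simp add: prod.lessThan_Suc_shift del: prod.lessThan_Suc)
  also have "\<dots> = gS g h d x * (((1+x)/2) powr ((1/2 - h) * real (MI D)) * ((1-x)/2) powr ((1/2 - g) * real (MII D)))"
    using Cons by simp
  also have "\<dots> = ((1+x)/2) powr ((1/2 - h) * real (MI (d#D))) * ((1-x)/2) powr ((1/2 - g) * real (MII (d#D)))"
  proof -
    obtain v t where d: "d = (v, t)" by force
    have pa: "\<And>z a m :: real. z powr (a * (1 + m)) = z powr a * z powr (a * m)"
      by (subst powr_add[symmetric]) (simp add: algebra_simps)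
    show ?thesis
    proof (cases t)
      case TI
      have e: "real (MI (d#D)) = 1 + real (MI D)" "MII (d#D) = MII D" using TI d by (simp_all add: MI_Cons MII_Cons)
      show ?thesis unfolding e pa using TI d by (simp add: gS_def)
    next
      case TII
      have e: "real (MII (d#D)) = 1 + real (MII D)" "MI (d#D) = MI D" using TII d by (simp_all add: MI_Cons MII_Cons)
      show ?thesis unfolding e pa using TII d by (simp add: gS_def)
    qed
  qed
  finally show ?case .
qed

lemma sum_j: "(\<Sum>j<nn. j) = nn * (nn - 1) div (2::nat)"
proof -
  have "2 * (\<Sum>j<nn. j) = nn * (nn - 1)"
  proof (induction nn)
    case (Suc m) thus ?case by (cases m) (auto simp: algebra_simps)
  qed simp
  thus ?thesis by simp
qed

lemma sum_K: "(\<Sum>j<nn. (j + 1) div 2) = (nn div 2) * ((nn + 1) div (2::nat))"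
proof (induction nn)
  case 0 thus ?case by simp
next
  case (Suc m)
  obtain p where "m = 2*p \<or> m = 2*p + 1" by (metis oddE evenE)
  thus ?case using Suc by auto
qed

lemma row_term:
  fixes q :: real
  assumes q: "q > 0"
  shows "(1 / (4 * (4*q))) ^ (j div 2) * (if even j then 1 else - 1 / (4*q)) = 1 / ((-4) ^ j * q ^ ((j+1) div 2))"
proof -
  obtain p where "j = 2*p \<or> j = 2*p + 1" by (metis oddE evenE)
  thus ?thesis
  proof
    assume j: "j = 2*p"
    have "(-4::real) ^ j = 16 ^ p" unfolding j power_mult by simp
    moreover have "(j+1) div 2 = p" "j div 2 = p" using j by auto
    ultimately show ?thesis using j q by (simp add: power_divide power_mult_distrib)
  next
    assume j: "j = 2*p + 1"
    have "(-4::real) ^ j = - 4 * 16 ^ p" unfolding j power_add power_mult by simp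
    moreover have "(j+1) div 2 = Suc p" "j div 2 = p" using j by auto
    ultimately show ?thesis using j q by (simp add: power_divide power_mult_distrib field_simps)
  qed
qed

lemma row_prod:
  fixes q :: real
  assumes q: "q > 0"
  shows "(\<Prod>j<nn. (1 / (4 * (4*q))) ^ (j div 2) * (if even j then 1 else - 1 / (4*q)))
    = 1 / ((-4) ^ (nn * (nn - 1) div 2) * q ^ ((nn div 2) * ((nn + 1) div 2)))"
proof -
  have "(\<Prod>j<nn. (1 / (4 * (4*q))) ^ (j div 2) * (if even j then 1 else - 1 / (4*q))) = (\<Prod>j<nn. 1 / ((-4) ^ j * q ^ ((j+1) div 2)))"
    using row_term[OF q] by simp
  also have "\<dots> = 1 / ((\<Prod>j<nn. (-4) ^ j) * (\<Prod>j<nn. q ^ ((j+1) div 2)))"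
    by (simp add: prod_dividef prod.distrib)
  also have "\<dots> = 1 / ((-4) ^ (\<Sum>j<nn. j) * q ^ (\<Sum>j<nn. (j+1) div 2))"
    by (simp add: power_sum)
  finally show ?thesis unfolding sum_j sum_K .
qed




lemma expo_all:
  fixes p q :: nat
  defines "M \<equiv> p + q"
  defines "fM \<equiv> \<lfloor>(real p - real q) / 2\<rfloor>" and "fmM \<equiv> \<lfloor>- ((real p - real q) / 2)\<rfloor>"
  defines "e \<equiv> int M - 2 * int (M div 2)"
  shows "int p * (int q + 1) - int (((M+1) div 2) * ((M+1+1) div 2)) = - ((fmM + 1) * (fmM + e))"
    and "int q * (int p + 1) - int (((M+1) div 2) * ((M+1+1) div 2)) = - ((fM + 1) * (fM + e))"
    and "int p * int q - int ((M div 2) * ((M+1) div 2)) = - (fM * (fM + e))"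
proof -
  obtain m where m: "M = 2*m \<or> M = 2*m + 1" by (metis oddE evenE)
  have all: "int p * (int q + 1) - int (((M+1) div 2) * ((M+1+1) div 2)) = - ((fmM + 1) * (fmM + e))
    \<and> int q * (int p + 1) - int (((M+1) div 2) * ((M+1+1) div 2)) = - ((fM + 1) * (fM + e))
    \<and> int p * int q - int ((M div 2) * ((M+1) div 2)) = - (fM * (fM + e))"
  using m proof
    assume M: "M = 2*m"
    define s where "s = int p - int m"
    have q: "int q = int m - s" using M unfolding s_def M_def by simp
    have r: "(real p - real q) / 2 = real_of_int s" using M unfolding s_def M_def by simp
    have f1: "fM = s" unfolding fM_def r by simp
    have f2: "fmM = - s" unfolding fmM_def r by (metis floor_of_int of_int_minus)
    have d: "M div 2 = m" "(M+1) div 2 = m" "(M+1+1) div 2 = m + 1" using M by auto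
    have ee: "e = 0" unfolding e_def d using M by simp
    have p: "int p = int m + s" unfolding s_def by simp
    show ?thesis unfolding f1 f2 ee d p q by (simp add: algebra_simps)
  next
    assume M: "M = 2*m + 1"
    define s where "s = int p - int m - 1"
    have q: "int q = int m - s" using M unfolding s_def M_def by simp
    have r: "(real p - real q) / 2 = real_of_int s + 1/2" using M unfolding s_def M_def by simp
    have f1: "fM = s" unfolding fM_def r by (simp add: floor_eq_iff)
    have f2: "fmM = - s - 1" unfolding fmM_def r by (simp add: floor_eq_iff)
    have d: "M div 2 = m" "(M+1) div 2 = m + 1" "(M+1+1) div 2 = m + 1" using M by auto
    have ee: "e = 1" unfolding e_def d using M by simp
    have p: "int p = int m + s + 1" unfolding s_def by simp
    show ?thesis unfolding f1 f2 ee d p q by (simp add: algebra_simps)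
  qed
  thus "int p * (int q + 1) - int (((M+1) div 2) * ((M+1+1) div 2)) = - ((fmM + 1) * (fmM + e))"
    and "int q * (int p + 1) - int (((M+1) div 2) * ((M+1+1) div 2)) = - ((fM + 1) * (fM + e))"
    and "int p * int q - int ((M div 2) * ((M+1) div 2)) = - (fM * (fM + e))" by auto
qed




lemma comb:
  fixes u w c X au bu aw bw eu ew :: real and K :: nat
  assumes u: "u > 0" and w: "w > 0"
    and eu: "au + bu - real K = eu" and ew: "aw + bw - real K = ew"
  shows "1 / (c * (u*w)^K) * (u powr au * w powr aw) * X * w powr bw * u powr bu = (1/c) * X * w powr ew * u powr eu"
proof -
  have k: "(u*w)^K = u powr real K * w powr real K"
    using u w by (simp add: powr_realpow power_mult_distrib)
  have e1: "u powr eu = u powr au * u powr bu / u powr real K" unfolding eu[symmetric] by (simp add: powr_add powr_diff)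
  have e2: "w powr ew = w powr aw * w powr bw / w powr real K" unfolding ew[symmetric] by (simp add: powr_add powr_diff)
  show ?thesis unfolding k e1 e2 using u w by (simp add: field_simps)
qed

lemma powi_neg: "(-4::real) powi (- int T) = 1 / (-4) ^ T"
  by (simp add: power_int_minus divide_inverse)


theorem mainTheorem4:
  fixes g h :: real and D :: "(nat \<times> seedtype) list" and n :: nat and x :: real
  assumes "g > 1/2" and "h > 1/2"
    and "distinct D" and "\<forall>d\<in>set D. seed_ok g h d"
    and "-1 < x" and "x < 1"
  shows "let M = length D; M' = (real (MI D) - real (MII D)) / 2;
             fM = \<lfloor>M'\<rfloor>; fmM = \<lfloor>- M'\<rfloor>; e = int M - 2 * int (M div 2) in
         PD g h D n x = (-4) powi (- int (M * (M + 1) div 2)) * det (amat g h D n x)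
            * ((1 - x) / 2) powr (- real_of_int ((fM + 1) * (fM + e)))
            * ((1 + x) / 2) powr (- real_of_int ((fmM + 1) * (fmM + e)))
       \<and> XiD g h D x = (-4) powi (- int (M * (M - 1) div 2)) * det (bmat g h D x)
            * ((1 - x) / 2 * ((1 + x) / 2)) powr (- real_of_int (fM * (fM + e)))"
proof -
  have x: "-1 < x" "x < 1" using assms by auto
  define u where "u = (1 + x) / 2"
  define w where "w = (1 - x) / 2"
  have u: "u > 0" and w: "w > 0" using x by (auto simp: u_def w_def)
  have D4: "1 - x^2 = 4 * (u * w)" unfolding u_def w_def by (simp add: power2_eq_square algebra_simps)
  define M where "M = length D"
  define p where "p = MI D"
  define q where "q = MII D"
  have Mpq: "M = p + q" unfolding M_def p_def q_def using MI_MII[of D] by simp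
  define fM where "fM = \<lfloor>(real p - real q) / 2\<rfloor>"
  define fmM where "fmM = \<lfloor>- ((real p - real q) / 2)\<rfloor>"
  define e where "e = int M - 2 * int (M div 2)"
  have ex1: "int p * (int q + 1) - int (((M+1) div 2) * ((M+1+1) div 2)) = - ((fmM + 1) * (fmM + e))"
    unfolding fmM_def e_def Mpq by (rule expo_all(1))
  have ex2: "int q * (int p + 1) - int (((M+1) div 2) * ((M+1+1) div 2)) = - ((fM + 1) * (fM + e))"
    unfolding fM_def e_def Mpq by (rule expo_all(2))
  have ex3: "int p * int q - int ((M div 2) * ((M+1) div 2)) = - (fM * (fM + e))"
    unfolding fM_def e_def Mpq by (rule expo_all(3))
  define fs where "fs = map (mu g h) D @ [Pn g h n]"
  define f1 where "f1 k = (if k < length D then f1S g h (D!k) else f1P g h n)" for k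
  define lam where "lam k = (if k < length D then - Etil g h (D!k) else - En g h n)" for k
  define F where "F k = (if k < length D then gS g h (D!k) x else 1)" for k
  define xx where "xx k = (if k < length D then xi g h (D!k) x else Pn g h n x)" for k
  define zz where "zz k = (if k < length D then zetatil g h (D!k) x else zetan g h n x)" for k
  have lfs: "length fs = M + 1" unfolding fs_def M_def by simp
  have nth: "fs ! k = (if k < length D then mu g h (D!k) else Pn g h n)" if "k < length fs" for k
    using that unfolding fs_def by (auto simp: nth_append)
  have W1: "wronskian fs x = (\<Prod>j<length fs. (1 / (4*(1-x^2))) ^ (j div 2) * (if even j then 1 else - 1 / (1-x^2)))
      * (\<Prod>k<length fs. F k) * det (mat (length fs) (length fs) (\<lambda>(i,k). lam k ^ (i div 2) * (if even i then xx k else zz k)))"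
  proof (rule wronskian_factor[OF x])
    fix k :: nat and y :: real assume k: "k < length fs" and y: "-1 < y" "y < 1"
    show "(fs ! k has_real_derivative f1 k y) (at y)"
      unfolding nth[OF k] f1_def using seed_d1[OF y] typeP_d1 by simp
    show "(f1 k has_real_derivative (poly (rp g h) y / (1-y^2) * f1 k y + lam k / (4*(1-y^2)) * (fs ! k) y)) (at y)"
      unfolding nth[OF k] f1_def lam_def using seed_d2[OF y] typeP_d2[OF y] by (cases "k < length D") simp_all
  next
    fix k assume k: "k < length fs"
    show "(fs ! k) x = F k * xx k" unfolding nth[OF k] F_def xx_def using seed_v0 by simp
    show "f1 k x = - (F k * zz k) / (1 - x^2)" unfolding f1_def F_def zz_def
      using seed_v1[OF x] valP[OF x] by simp
  qed
  have Am: "mat (length fs) (length fs) (\<lambda>(i,k). lam k ^ (i div 2) * (if even i then xx k else zz k)) = amat g h D n x"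
    unfolding amat_def lfs M_def by (rule arg_cong[where f = "mat _ _"]) (auto simp: fun_eq_iff lam_def xx_def zz_def)
  have Fp: "(\<Prod>k<length fs. F k) = u powr ((1/2 - h) * real p) * w powr ((1/2 - g) * real q)"
    unfolding lfs M_def using gauge_prod[OF x, of g h D] by (simp add: F_def u_def w_def p_def q_def)
  have Rp: "(\<Prod>j<length fs. (1 / (4*(1-x^2))) ^ (j div 2) * (if even j then 1 else - 1 / (1-x^2)))
      = 1 / ((-4) ^ (M * (M + 1) div 2) * (u*w) ^ (((M+1) div 2) * ((M+1+1) div 2)))"
    unfolding lfs D4 row_prod[OF mult_pos_pos[OF u w]] by (simp add: mult.commute)
  have PD: "PD g h D n x = (-4) powi (- int (M * (M + 1) div 2)) * det (amat g h D n x)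
            * w powr (- real_of_int ((fM + 1) * (fM + e))) * u powr (- real_of_int ((fmM + 1) * (fmM + e)))"
  proof -
    have "PD g h D n x = 1 / ((-4) ^ (M * (M + 1) div 2) * (u*w) ^ (((M+1) div 2) * ((M+1+1) div 2)))
       * (u powr ((1/2 - h) * real p) * w powr ((1/2 - g) * real q)) * det (amat g h D n x)
       * w powr ((real p + g + 1/2) * real q) * u powr ((real q + h + 1/2) * real p)"
      unfolding PD_def fs_def[symmetric] W1 Am Fp Rp u_def w_def p_def q_def ..
    also have "\<dots> = 1 / (-4) ^ (M * (M + 1) div 2) * det (amat g h D n x)
         * w powr (- real_of_int ((fM + 1) * (fM + e))) * u powr (- real_of_int ((fmM + 1) * (fmM + e)))"
    proof (rule comb[OF u w])
      have "real_of_int (int p * (int q + 1) - int (((M+1) div 2) * ((M+1+1) div 2))) = real_of_int (- ((fmM + 1) * (fmM + e)))"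
        using ex1 by (rule arg_cong)
      thus "(1/2 - h) * real p + (real q + h + 1/2) * real p - real (((M+1) div 2) * ((M+1+1) div 2)) = - real_of_int ((fmM + 1) * (fmM + e))"
        by (simp add: algebra_simps)
      have "real_of_int (int q * (int p + 1) - int (((M+1) div 2) * ((M+1+1) div 2))) = real_of_int (- ((fM + 1) * (fM + e)))"
        using ex2 by (rule arg_cong)
      thus "(1/2 - g) * real q + (real p + g + 1/2) * real q - real (((M+1) div 2) * ((M+1+1) div 2)) = - real_of_int ((fM + 1) * (fM + e))"
        by (simp add: algebra_simps)
    qed
    finally show ?thesis by (simp add: powi_neg)
  qed
  define gs where "gs = map (mu g h) D"
  define f1' where "f1' k = f1S g h (D!k)" for k
  define lam' where "lam' k = - Etil g h (D!k)" for k
  define F' where "F' k = gS g h (D!k) x" for k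
  define xx' where "xx' k = xi g h (D!k) x" for k
  define zz' where "zz' k = zetatil g h (D!k) x" for k
  have lgs: "length gs = M" unfolding gs_def M_def by simp
  have W2: "wronskian gs x = (\<Prod>j<length gs. (1 / (4*(1-x^2))) ^ (j div 2) * (if even j then 1 else - 1 / (1-x^2)))
      * (\<Prod>k<length gs. F' k) * det (mat (length gs) (length gs) (\<lambda>(i,k). lam' k ^ (i div 2) * (if even i then xx' k else zz' k)))"
  proof (rule wronskian_factor[OF x])
    fix k :: nat and y :: real assume k: "k < length gs" and y: "-1 < y" "y < 1"
    show "(gs ! k has_real_derivative f1' k y) (at y)"
      using k unfolding gs_def f1'_def using seed_d1[OF y] by simp
    show "(f1' k has_real_derivative (poly (rp g h) y / (1-y^2) * f1' k y + lam' k / (4*(1-y^2)) * (gs ! k) y)) (at y)"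
      using k unfolding gs_def f1'_def lam'_def using seed_d2[OF y] by simp
  next
    fix k assume k: "k < length gs"
    show "(gs ! k) x = F' k * xx' k" using k unfolding gs_def F'_def xx'_def using seed_v0 by simp
    show "f1' k x = - (F' k * zz' k) / (1 - x^2)" unfolding f1'_def F'_def zz'_def
      using seed_v1[OF x] by simp
  qed
  have Bm: "mat (length gs) (length gs) (\<lambda>(i,k). lam' k ^ (i div 2) * (if even i then xx' k else zz' k)) = bmat g h D x"
    unfolding bmat_def lgs M_def by (rule arg_cong[where f = "mat _ _"]) (auto simp: fun_eq_iff lam'_def xx'_def zz'_def)
  have Fp': "(\<Prod>k<length gs. F' k) = u powr ((1/2 - h) * real p) * w powr ((1/2 - g) * real q)"
    unfolding lgs M_def using gauge_prod[OF x, of g h D] by (simp add: F'_def u_def w_def p_def q_def)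
  have Rp': "(\<Prod>j<length gs. (1 / (4*(1-x^2))) ^ (j div 2) * (if even j then 1 else - 1 / (1-x^2)))
      = 1 / ((-4) ^ (M * (M - 1) div 2) * (u*w) ^ ((M div 2) * ((M+1) div 2)))"
    unfolding lgs D4 row_prod[OF mult_pos_pos[OF u w]] ..
  have XI: "XiD g h D x = (-4) powi (- int (M * (M - 1) div 2)) * det (bmat g h D x)
            * (w * u) powr (- real_of_int (fM * (fM + e)))"
  proof -
    have "XiD g h D x = 1 / ((-4) ^ (M * (M - 1) div 2) * (u*w) ^ ((M div 2) * ((M+1) div 2)))
       * (u powr ((1/2 - h) * real p) * w powr ((1/2 - g) * real q)) * det (bmat g h D x)
       * w powr ((real p + g - 1/2) * real q) * u powr ((real q + h - 1/2) * real p)"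
      unfolding XiD_def gs_def[symmetric] W2 Bm Fp' Rp' u_def w_def p_def q_def ..
    also have "\<dots> = 1 / (-4) ^ (M * (M - 1) div 2) * det (bmat g h D x)
         * w powr (- real_of_int (fM * (fM + e))) * u powr (- real_of_int (fM * (fM + e)))"
    proof (rule comb[OF u w])
      have "real_of_int (int p * int q - int ((M div 2) * ((M+1) div 2))) = real_of_int (- (fM * (fM + e)))"
        using ex3 by (rule arg_cong)
      thus "(1/2 - h) * real p + (real q + h - 1/2) * real p - real ((M div 2) * ((M+1) div 2)) = - real_of_int (fM * (fM + e))"
        by (simp add: algebra_simps)
      thus "(1/2 - g) * real q + (real p + g - 1/2) * real q - real ((M div 2) * ((M+1) div 2)) = - real_of_int (fM * (fM + e))"
        by (simp add: algebra_simps)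
    qed
    also have "\<dots> = (-4) powi (- int (M * (M - 1) div 2)) * det (bmat g h D x) * (w * u) powr (- real_of_int (fM * (fM + e)))"
      using u w by (simp add: powi_neg powr_mult)
    finally show ?thesis .
  qed
  have M': "(real (MI D) - real (MII D)) / 2 = (real p - real q) / 2" unfolding p_def q_def ..
  show ?thesis unfolding Let_def M' fM_def[symmetric] fmM_def[symmetric] M_def[symmetric] e_def[symmetric]
    using PD XI unfolding u_def w_def by simp
qed

end
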